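(* Let $X$ be a real Banach space with a normalized Schauder basis $\mathcal B=(e_n)_{n=1}^\infty$ with biorthogonal functionals $(e_n^* )$, let $\mathcal E=(\varepsilon_n)_{n=1}^\infty$ be a sequence of nonnegative numbers, and let $K=K_{\mathcal B,\mathcal E}$. Then: (1) $r^{\rm ext}(K)\le r^{\rm unc}(K)$; (2) if $r^{\rm ext}(K)<\infty$ then $r^{\rm ext}(K)=\sup_{x\in K}\|x\|$; (3) if $r^{\rm unc}(K)<\infty$ then $r^{\rm ext}(K)=r^{\rm unc}(K)=\sup_{x\in K}\|x\|$.
   Context: The brick is $K_{\mathcal B,\mathcal E}=\{x\in X:\ |e_n^*(x)|\le\varepsilon_n \text{ for all } n\}$. A point $x_0\in A$ is an extreme point of $A$ if for every nonzero $x\in X$ there is $\lambda\in[-1,1]$ with $x_0+\lambda x\notin A$ (for a brick, these are exactly the $x_0$ with $|e_n^*(x_0)|=\varepsilon_n$ for all $n$). The extreme radius $r^{\rm ext}(K)$ is the supremum of $\|x_0\|$ over extreme points $x_0$ of $K$ if an extreme point exists, and $\infty$ otherwise. The unconditional radius is $r^{\rm unc}(K)=\sup_{\theta_n=\pm1}\|\sum_{n=1}^\infty\theta_n\varepsilon_ne_n\|$, where the norm of a divergent series is $\infty$. *)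

theory Defs
  imports "HOL-Analysis.Analysis"
begin

text \<open>A Schauder basis of a Banach space: every vector has a unique norm-convergent
  expansion in the basis. Indices start at 0 (the paper's index n corresponds to n-1).\<close>
definition schauder_basis :: "(nat \<Rightarrow> 'a::banach) \<Rightarrow> bool" where
  "schauder_basis e \<longleftrightarrow> (\<forall>x. \<exists>!a::nat \<Rightarrow> real. (\<lambda>k. a k *\<^sub>R e k) sums x)"

definition coord :: "(nat \<Rightarrow> 'a::banach) \<Rightarrow> nat \<Rightarrow> 'a \<Rightarrow> real" where
  "coord e n x = (THE a::nat \<Rightarrow> real. (\<lambda>k. a k *\<^sub>R e k) sums x) n"

definition brick :: "(nat \<Rightarrow> 'a::banach) \<Rightarrow> (nat \<Rightarrow> real) \<Rightarrow> 'a set" where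
  "brick e eps = {x. \<forall>n. \<bar>coord e n x\<bar> \<le> eps n}"

definition is_extreme_pt :: "'a::real_vector set \<Rightarrow> 'a \<Rightarrow> bool" where
  "is_extreme_pt A x0 \<longleftrightarrow> x0 \<in> A \<and>
     (\<forall>x. x \<noteq> 0 \<longrightarrow> (\<exists>t\<in>{-1..1::real}. x0 + t *\<^sub>R x \<notin> A))"

definition ext_radius :: "'a::real_normed_vector set \<Rightarrow> ereal" where
  "ext_radius A = (if \<exists>x0. is_extreme_pt A x0
     then (SUP x0\<in>{x0. is_extreme_pt A x0}. ereal (norm x0)) else \<infinity>)"

definition series_norm :: "(nat \<Rightarrow> 'a::real_normed_vector) \<Rightarrow> ereal" where
  "series_norm f = (if summable f then ereal (norm (suminf f)) else \<infinity>)"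

definition unc_radius :: "(nat \<Rightarrow> 'a::banach) \<Rightarrow> (nat \<Rightarrow> real) \<Rightarrow> ereal" where
  "unc_radius e eps = (SUP \<theta>\<in>{\<theta>::nat \<Rightarrow> real. \<forall>n. \<theta> n = 1 \<or> \<theta> n = -1}.
      series_norm (\<lambda>n. (\<theta> n * eps n) *\<^sub>R e n))"

end

theory Submission imports Defs begin

lemma coord_sums:
  assumes "schauder_basis e"
  shows "(\<lambda>k. coord e k x *\<^sub>R e k) sums x"
proof -
  from assms have ex: "\<exists>!a::nat \<Rightarrow> real. (\<lambda>k. a k *\<^sub>R e k) sums x"
    unfolding schauder_basis_def by blast
  have "(\<lambda>k. (THE a::nat \<Rightarrow> real. (\<lambda>k. a k *\<^sub>R e k) sums x) k *\<^sub>R e k) sums x"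
    using theI'[OF ex] by simp
  then show ?thesis unfolding coord_def .
qed

lemma coord_eq:
  assumes "schauder_basis e" and "(\<lambda>k. a k *\<^sub>R e k) sums x"
  shows "coord e n x = a n"
proof -
  from assms(1) have ex: "\<exists>!a::nat \<Rightarrow> real. (\<lambda>k. a k *\<^sub>R e k) sums x"
    unfolding schauder_basis_def by blast
  have "(THE a::nat \<Rightarrow> real. (\<lambda>k. a k *\<^sub>R e k) sums x) = a"
    using the1_equality[where P="\<lambda>a. (\<lambda>k. a k *\<^sub>R e k) sums x", OF ex assms(2)] .
  then show ?thesis unfolding coord_def by simp
qed

lemma coord_add:
  assumes "schauder_basis e"
  shows "coord e n (x + y) = coord e n x + coord e n y"
proof -
  have "(\<lambda>k. (coord e k x + coord e k y) *\<^sub>R e k) sums (x + y)"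
    using sums_add[OF coord_sums[OF assms, of x] coord_sums[OF assms, of y]]
    by (simp add: scaleR_add_left)
  from coord_eq[OF assms this] show ?thesis by simp
qed

lemma coord_diff:
  assumes "schauder_basis e"
  shows "coord e n (x - y) = coord e n x - coord e n y"
proof -
  have "(\<lambda>k. (coord e k x - coord e k y) *\<^sub>R e k) sums (x - y)"
    using sums_diff[OF coord_sums[OF assms, of x] coord_sums[OF assms, of y]]
    by (simp add: scaleR_diff_left)
  from coord_eq[OF assms this] show ?thesis by simp
qed

lemma coord_scaleR:
  assumes "schauder_basis e"
  shows "coord e n (c *\<^sub>R x) = c * coord e n x"
proof -
  have "(\<lambda>k. (c * coord e k x) *\<^sub>R e k) sums (c *\<^sub>R x)"
    using sums_scaleR_right[OF coord_sums[OF assms, of x], of c] by simp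
  from coord_eq[OF assms this] show ?thesis by simp
qed

lemma coord_fin:
  assumes "schauder_basis e"
  shows "coord e n (\<Sum>k<N. c k *\<^sub>R e k) = (if n < N then c n else 0)"
proof -
  have "(\<lambda>k. (if k < N then c k else 0) *\<^sub>R e k) sums (\<Sum>k<N. (if k < N then c k else 0) *\<^sub>R e k)"
    by (rule sums_finite) auto
  moreover have "(\<Sum>k<N. (if k < N then c k else 0) *\<^sub>R e k) = (\<Sum>k<N. c k *\<^sub>R e k)"
    by (rule sum.cong) auto
  ultimately have "(\<lambda>k. (if k < N then c k else 0) *\<^sub>R e k) sums (\<Sum>k<N. c k *\<^sub>R e k)" by simp
  from coord_eq[OF assms this] show ?thesis by simp
qed

lemma coord_single:
  assumes "schauder_basis e"
  shows "coord e n (x + c *\<^sub>R e m) = coord e n x + (if n = m then c else 0)"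
proof -
  have "coord e n (c *\<^sub>R e m) = (if n = m then c else 0)"
    using coord_fin[OF assms, where n=n and N="Suc m" and c="\<lambda>k. if k = m then c else 0"]
    by (simp add: if_distrib cong: if_cong)
  then show ?thesis by (simp add: coord_add[OF assms])
qed

lemma coord_nonzero:
  assumes "schauder_basis e" "x \<noteq> 0"
  shows "\<exists>m. coord e m x \<noteq> 0"
proof (rule ccontr)
  assume "\<not> ?thesis"
  then have "(\<lambda>k. coord e k x *\<^sub>R e k) = (\<lambda>k. 0)" by auto
  with coord_sums[OF assms(1), of x] have "(\<lambda>k. 0) sums x" by simp
  then have "x = 0" using sums_unique2[OF _ sums_zero] by blast
  with assms show False by simp
qed

lemma extreme_iff:
  assumes sb: "schauder_basis e" and ne: "\<forall>n. norm (e n) = 1" and ep: "\<forall>n. eps n \<ge> 0"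
  shows "is_extreme_pt (brick e eps) x0 \<longleftrightarrow> (\<forall>n. \<bar>coord e n x0\<bar> = eps n)"
proof
  assume ex: "is_extreme_pt (brick e eps) x0"
  then have inK: "\<forall>n. \<bar>coord e n x0\<bar> \<le> eps n"
    unfolding is_extreme_pt_def brick_def by auto
  show "\<forall>n. \<bar>coord e n x0\<bar> = eps n"
  proof (rule ccontr)
    assume "\<not> (\<forall>n. \<bar>coord e n x0\<bar> = eps n)"
    then obtain n where "\<bar>coord e n x0\<bar> \<noteq> eps n" by blast
    with inK have lt: "\<bar>coord e n x0\<bar> < eps n" by (meson order_le_less)
    define d where "d = eps n - \<bar>coord e n x0\<bar>"
    have dpos: "d > 0" using lt d_def by simp
    have "d *\<^sub>R e n \<noteq> 0" proof -
      have "e n \<noteq> 0" using ne by (metis norm_zero zero_neq_one)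
      then show ?thesis using dpos by simp
    qed
    then obtain t where t: "t \<in> {-1..1::real}" "x0 + t *\<^sub>R (d *\<^sub>R e n) \<notin> brick e eps"
      using ex unfolding is_extreme_pt_def by blast
    have "x0 + t *\<^sub>R (d *\<^sub>R e n) \<in> brick e eps"
      unfolding brick_def
    proof (safe)
      fix k
      have c: "coord e k (x0 + t *\<^sub>R (d *\<^sub>R e n)) = coord e k x0 + (if k = n then t * d else 0)"
        using coord_single[OF sb, of k x0 "t * d" n] by simp
      show "\<bar>coord e k (x0 + t *\<^sub>R (d *\<^sub>R e n))\<bar> \<le> eps k"
      proof (cases "k = n")
        case True
        have "\<bar>t * d\<bar> \<le> d" using t(1) dpos by (auto simp: abs_mult intro: mult_left_le_one_le)
        then show ?thesis using True c d_def by simp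
      next
        case False then show ?thesis using c inK by simp
      qed
    qed
    with t(2) show False by blast
  qed
next
  assume eq: "\<forall>n. \<bar>coord e n x0\<bar> = eps n"
  show "is_extreme_pt (brick e eps) x0"
    unfolding is_extreme_pt_def
  proof (intro conjI allI impI)
    show "x0 \<in> brick e eps" using eq unfolding brick_def by simp
    fix x :: 'a assume "x \<noteq> 0"
    then obtain m where m: "coord e m x \<noteq> 0" using coord_nonzero[OF sb] by blast
    define t :: real where "t = (if coord e m x0 * coord e m x \<ge> 0 then 1 else -1)"
    have cm: "coord e m (x0 + t *\<^sub>R x) = coord e m x0 + t * coord e m x"
      using coord_add[OF sb] coord_scaleR[OF sb] by simp
    have "\<bar>coord e m x0 + t * coord e m x\<bar> = \<bar>coord e m x0\<bar> + \<bar>coord e m x\<bar>"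
    proof (cases "coord e m x0 * coord e m x \<ge> 0")
      case True
      then have "(0 \<le> coord e m x0 \<and> 0 \<le> coord e m x) \<or> (coord e m x0 \<le> 0 \<and> coord e m x \<le> 0)"
        by (simp add: zero_le_mult_iff)
      moreover have "t = 1" unfolding t_def using True by simp
      ultimately show ?thesis by (elim disjE) (simp_all add: abs_of_nonneg abs_of_nonpos)
    next
      case False
      then have "(0 \<le> coord e m x0 \<and> coord e m x \<le> 0) \<or> (coord e m x0 \<le> 0 \<and> 0 \<le> coord e m x)"
        by (auto simp: zero_le_mult_iff)
      moreover have "t = -1" unfolding t_def using False by simp
      ultimately show ?thesis by (elim disjE) (simp_all add: abs_of_nonneg abs_of_nonpos)
    qed
    then have "\<bar>coord e m (x0 + t *\<^sub>R x)\<bar> > eps m" using cm eq m by simp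
    then have "x0 + t *\<^sub>R x \<notin> brick e eps" unfolding brick_def by (auto simp: not_le)
    moreover have "t \<in> {-1..1}" unfolding t_def by simp
    ultimately show "\<exists>t\<in>{-1..1::real}. x0 + t *\<^sub>R x \<notin> brick e eps" by blast
  qed
qed

lemma convex_split:
  fixes y v :: "'a::real_vector"
  shows "l *\<^sub>R (y + a *\<^sub>R v) + (1 - l) *\<^sub>R (y + b *\<^sub>R v) = y + (l * a + (1 - l) * b) *\<^sub>R v"
  by (simp add: algebra_simps)

lemma interp:
  assumes sb: "schauder_basis e" and ep: "\<forall>n. eps n \<ge> 0"
    and bound: "\<forall>z. (\<forall>n. \<bar>coord e n z\<bar> = eps n) \<longrightarrow> norm z \<le> R"
  shows "(\<forall>n. \<bar>coord e n y\<bar> \<le> eps n) \<Longrightarrow> (\<forall>n\<ge>N. \<bar>coord e n y\<bar> = eps n) \<Longrightarrow> norm y \<le> R"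
proof (induction N arbitrary: y)
  case 0
  then show ?case using bound by simp
next
  case (Suc N)
  show ?case
  proof (cases "\<bar>coord e N y\<bar> = eps N")
    case True
    have "\<forall>n\<ge>N. \<bar>coord e n y\<bar> = eps n"
    proof (intro allI impI)
      fix n assume "N \<le> n"
      then show "\<bar>coord e n y\<bar> = eps n" using True Suc.prems(2) by (cases "n = N") auto
    qed
    then show ?thesis using Suc.IH Suc.prems(1) by blast
  next
    case False
    define c where "c = coord e N y"
    have lt: "\<bar>c\<bar> < eps N" using False Suc.prems(1) c_def by (meson order_le_less)
    define yp where "yp = y + (eps N - c) *\<^sub>R e N"
    define ym where "ym = y + (- eps N - c) *\<^sub>R e N"
    have cp: "coord e n yp = coord e n y + (if n = N then eps N - c else 0)" for n
      unfolding yp_def by (rule coord_single[OF sb])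
    have cm: "coord e n ym = coord e n y + (if n = N then - eps N - c else 0)" for n
      unfolding ym_def by (rule coord_single[OF sb])
    have nyp: "norm yp \<le> R"
      apply (rule Suc.IH)
      using Suc.prems ep by (auto simp: cp c_def not_less_eq_eq)
    have nym: "norm ym \<le> R"
      apply (rule Suc.IH)
      using Suc.prems ep by (auto simp: cm c_def not_less_eq_eq)
    define l where "l = (c + eps N) / (2 * eps N)"
    have epos: "eps N > 0" using lt by linarith
    have l01: "0 \<le> l" "l \<le> 1" using lt epos unfolding l_def by (auto simp: field_simps abs_less_iff)
    have "y = l *\<^sub>R yp + (1 - l) *\<^sub>R ym"
    proof -
      have "l * (eps N - c) + (1 - l) * (- eps N - c) = 0"
        using epos unfolding l_def by (simp add: field_simps)
      then show ?thesis unfolding yp_def ym_def convex_split by simp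
    qed
    then have "norm y = norm (l *\<^sub>R yp + (1 - l) *\<^sub>R ym)" by simp
    also have "\<dots> \<le> norm (l *\<^sub>R yp) + norm ((1 - l) *\<^sub>R ym)"
      by (rule norm_triangle_ineq)
    also have "\<dots> = l * norm yp + (1 - l) * norm ym"
      using l01 by simp
    finally have ny: "norm y \<le> l * norm yp + (1 - l) * norm ym" .
    have "norm y \<le> l * R + (1 - l) * R"
    proof -
      note a = nyp nym
      have "l * norm yp \<le> l * R" using a(1) l01 by (intro mult_left_mono) auto
      moreover have "(1 - l) * norm ym \<le> (1 - l) * R" using a(2) l01 by (intro mult_left_mono) auto
      ultimately show ?thesis using ny by linarith
    qed
    then show ?thesis by (simp add: algebra_simps)
  qed
qed

lemma brick_bound:
  assumes sb: "schauder_basis e" and ep: "\<forall>n. eps n \<ge> 0"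
    and bound: "\<forall>z. (\<forall>n. \<bar>coord e n z\<bar> = eps n) \<longrightarrow> norm z \<le> R"
    and x0: "\<forall>n. \<bar>coord e n x0\<bar> = eps n"
    and x: "x \<in> brick e eps"
  shows "norm x \<le> R"
proof -
  define d where "d = x0 - x"
  define Y where "Y N = x0 - (\<Sum>k<N. coord e k d *\<^sub>R e k)" for N
  have cY: "coord e n (Y N) = (if n < N then coord e n x else coord e n x0)" for n N
    unfolding Y_def d_def using coord_diff[OF sb] coord_fin[OF sb] by simp
  have xb: "\<forall>n. \<bar>coord e n x\<bar> \<le> eps n" using x unfolding brick_def by simp
  have nb: "norm (Y N) \<le> R" for N
    by (rule interp[OF sb ep bound, of _ N]) (auto simp: cY xb x0 order.eq_iff)
  have "(\<lambda>N. \<Sum>k<N. coord e k d *\<^sub>R e k) \<longlonglongrightarrow> d"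
    using coord_sums[OF sb, of d] unfolding sums_def .
  then have "Y \<longlonglongrightarrow> x0 - d" unfolding Y_def by (intro tendsto_diff tendsto_const)
  then have "Y \<longlonglongrightarrow> x" unfolding d_def by simp
  then have "(\<lambda>N. norm (Y N)) \<longlonglongrightarrow> norm x" by (rule tendsto_norm)
  then show ?thesis using nb by (intro LIMSEQ_le_const2) auto
qed

theorem theorem3p2:
  fixes e :: "nat \<Rightarrow> 'a::banach" and eps :: "nat \<Rightarrow> real"
  assumes "schauder_basis e"
    and "\<forall>n. norm (e n) = 1"
    and "\<forall>n. eps n \<ge> 0"
  shows "ext_radius (brick e eps) \<le> unc_radius e eps
    \<and> (ext_radius (brick e eps) < \<infinity> \<longrightarrow>
         ext_radius (brick e eps) = (SUP x\<in>brick e eps. ereal (norm x)))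
    \<and> (unc_radius e eps < \<infinity> \<longrightarrow>
         ext_radius (brick e eps) = unc_radius e eps
         \<and> unc_radius e eps = (SUP x\<in>brick e eps. ereal (norm x)))"
proof -
  note sb = assms(1) and ne = assms(2) and ep = assms(3)
  define K where "K = brick e eps"
  define Th where "Th = {\<theta>::nat \<Rightarrow> real. \<forall>n. \<theta> n = 1 \<or> \<theta> n = -1}"
  have extI: "is_extreme_pt K x0 \<longleftrightarrow> (\<forall>n. \<bar>coord e n x0\<bar> = eps n)" for x0
    unfolding K_def by (rule extreme_iff[OF sb ne ep])
  have unc_def': "unc_radius e eps = (SUP \<theta>\<in>Th. series_norm (\<lambda>n. (\<theta> n * eps n) *\<^sub>R e n))"
    unfolding unc_radius_def Th_def by simp
  have ext_def': "ext_radius K = (if \<exists>x0. is_extreme_pt K x0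
     then (SUP x0\<in>{x0. is_extreme_pt K x0}. ereal (norm x0)) else \<infinity>)"
    unfolding ext_radius_def by simp
  have factA: "is_extreme_pt K (suminf (\<lambda>n. (\<theta> n * eps n) *\<^sub>R e n))"
    if "\<theta> \<in> Th" "summable (\<lambda>n. (\<theta> n * eps n) *\<^sub>R e n)" for \<theta>
  proof -
    have "(\<lambda>n. (\<theta> n * eps n) *\<^sub>R e n) sums suminf (\<lambda>n. (\<theta> n * eps n) *\<^sub>R e n)"
      using that(2) by (rule summable_sums)
    from coord_eq[OF sb this] have "coord e n (suminf (\<lambda>n. (\<theta> n * eps n) *\<^sub>R e n)) = \<theta> n * eps n" for n .
    moreover have "\<bar>\<theta> n * eps n\<bar> = eps n" for n
    proof -
      have "\<theta> n = 1 \<or> \<theta> n = -1" using that(1) unfolding Th_def by blast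
      then show ?thesis using ep by (auto simp: abs_mult)
    qed
    ultimately show ?thesis unfolding extI by simp
  qed
  have factB: "ereal (norm x0) \<le> unc_radius e eps" if "is_extreme_pt K x0" for x0
  proof -
    define \<theta> where "\<theta> n = (if coord e n x0 \<ge> 0 then 1 else (-1::real))" for n
    have th: "\<theta> \<in> Th" unfolding Th_def \<theta>_def by simp
    have eqc: "\<theta> n * eps n = coord e n x0" for n
    proof -
      have "\<bar>coord e n x0\<bar> = eps n" using that unfolding extI by blast
      then show ?thesis unfolding \<theta>_def by (auto simp: abs_if split: if_splits)
    qed
    have "(\<lambda>n. (\<theta> n * eps n) *\<^sub>R e n) sums x0"
      unfolding eqc by (rule coord_sums[OF sb])
    then have "series_norm (\<lambda>n. (\<theta> n * eps n) *\<^sub>R e n) = ereal (norm x0)"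
      unfolding series_norm_def by (simp add: sums_iff)
    moreover have "series_norm (\<lambda>n. (\<theta> n * eps n) *\<^sub>R e n) \<le> unc_radius e eps"
      unfolding unc_def' by (rule SUP_upper[OF th])
    ultimately show ?thesis by simp
  qed
  have P1: "ext_radius K \<le> unc_radius e eps"
  proof (cases "\<exists>x0. is_extreme_pt K x0")
    case True
    have "(SUP x0\<in>{x0. is_extreme_pt K x0}. ereal (norm x0)) \<le> unc_radius e eps"
      by (rule SUP_least) (simp add: factB)
    then show ?thesis unfolding ext_def' using True by simp
  next
    case False
    define one where "one = (\<lambda>n::nat. 1::real)"
    have one: "one \<in> Th" unfolding Th_def one_def by simp
    have "\<not> summable (\<lambda>n. (one n * eps n) *\<^sub>R e n)" using factA[OF one] False by blast
    then have "series_norm (\<lambda>n. (one n * eps n) *\<^sub>R e n) = \<infinity>" unfolding series_norm_def by simp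
    moreover have "series_norm (\<lambda>n. (one n * eps n) *\<^sub>R e n) \<le> unc_radius e eps"
      unfolding unc_def' by (rule SUP_upper[OF one])
    ultimately have "unc_radius e eps = \<infinity>" by simp
    then show ?thesis by simp
  qed
  have P2: "ext_radius K = (SUP x\<in>K. ereal (norm x))" if lt: "ext_radius K < \<infinity>"
  proof -
    have exx: "\<exists>x0. is_extreme_pt K x0"
    proof (rule ccontr)
      assume nex: "\<not> ?thesis" then have "ext_radius K = \<infinity>" by (simp only: ext_def' if_not_P[OF nex] if_False)
      with lt show False by simp
    qed
    then obtain x0 where x0: "is_extreme_pt K x0" by blast
    have E: "ext_radius K = (SUP x0\<in>{x0. is_extreme_pt K x0}. ereal (norm x0))"
      unfolding ext_def' using exx by simp
    have ge0: "ereal (norm x0) \<le> ext_radius K" unfolding E using x0 by (auto intro: SUP_upper)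
    then have "ext_radius K \<noteq> -\<infinity>" by auto
    with lt obtain R where R: "ext_radius K = ereal R" by (cases "ext_radius K") auto
    have bound: "\<forall>z. (\<forall>n. \<bar>coord e n z\<bar> = eps n) \<longrightarrow> norm z \<le> R"
    proof (intro allI impI)
      fix z assume "\<forall>n. \<bar>coord e n z\<bar> = eps n"
      then have "is_extreme_pt K z" using extI by simp
      then have "ereal (norm z) \<le> ext_radius K" unfolding E by (auto intro: SUP_upper)
      then show "norm z \<le> R" using R by simp
    qed
    have "(SUP x\<in>K. ereal (norm x)) \<le> ext_radius K"
    proof (rule SUP_least)
      fix x assume "x \<in> K"
      then have "norm x \<le> R"
        using brick_bound[OF sb ep bound, of x0 x] x0 extI unfolding K_def by simp
      then show "ereal (norm x) \<le> ext_radius K" using R by simp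
    qed
    moreover have "ext_radius K \<le> (SUP x\<in>K. ereal (norm x))"
      unfolding E
    proof (rule SUP_least)
      fix y assume "y \<in> {x0. is_extreme_pt K x0}"
      then have "y \<in> K" unfolding is_extreme_pt_def by simp
      then show "ereal (norm y) \<le> (SUP x\<in>K. ereal (norm x))" by (rule SUP_upper)
    qed
    ultimately show ?thesis by (rule antisym[rotated])
  qed
  have P3: "ext_radius K = unc_radius e eps" if lt: "unc_radius e eps < \<infinity>"
  proof -
    have summ: "summable (\<lambda>n. (\<theta> n * eps n) *\<^sub>R e n)" if "\<theta> \<in> Th" for \<theta>
    proof (rule ccontr)
      assume "\<not> ?thesis"
      then have "series_norm (\<lambda>n. (\<theta> n * eps n) *\<^sub>R e n) = \<infinity>" unfolding series_norm_def by simp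
      moreover have "series_norm (\<lambda>n. (\<theta> n * eps n) *\<^sub>R e n) \<le> unc_radius e eps"
        unfolding unc_def' by (rule SUP_upper[OF that])
      ultimately have "unc_radius e eps = \<infinity>" by simp
      with lt show False by simp
    qed
    define one where "one = (\<lambda>n::nat. 1::real)"
    have one: "one \<in> Th" unfolding Th_def one_def by simp
    have exx: "\<exists>x0. is_extreme_pt K x0" using factA[OF one summ[OF one]] by blast
    have E: "ext_radius K = (SUP x0\<in>{x0. is_extreme_pt K x0}. ereal (norm x0))"
      unfolding ext_def' using exx by simp
    have "unc_radius e eps \<le> ext_radius K"
      unfolding unc_def'
    proof (rule SUP_least)
      fix \<theta> assume th: "\<theta> \<in> Th"
      have "series_norm (\<lambda>n. (\<theta> n * eps n) *\<^sub>R e n) = ereal (norm (suminf (\<lambda>n. (\<theta> n * eps n) *\<^sub>R e n)))"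
        unfolding series_norm_def using summ[OF th] by simp
      also have "\<dots> \<le> ext_radius K" unfolding E using factA[OF th summ[OF th]] by (auto intro: SUP_upper)
      finally show "series_norm (\<lambda>n. (\<theta> n * eps n) *\<^sub>R e n) \<le> ext_radius K" .
    qed
    with P1 show ?thesis by (rule antisym)
  qed
  have P4: "unc_radius e eps = (SUP x\<in>K. ereal (norm x))" if "unc_radius e eps < \<infinity>"
    using P2 P3[OF that] that by simp
  show ?thesis
    unfolding K_def[symmetric] using P1 P2 P3 P4 by blast
qed

end
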